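(* Let $G=(V,E)$ be a threshold graph. An edge $e\in E$ is threshold-safe (i.e., $G-e$ is a threshold graph) if and only if $e$ is neither the middle edge of an induced diamond nor a side edge of an induced paw in $G$.
   Context: A graph $G=(V,E)$ is threshold if there exist a labeling $\ell:V\to\mathbb{N}_0$ and $t\in\mathbb{N}_0$ such that $X\subseteq V$ is independent iff $\sum_{x\in X}\ell(x)\le t$. A diamond is $K_4$ minus an edge; its middle edge joins its two degree-3 vertices. A paw is the graph on $\{a,b,c,d\}$ with edges $ab,bc,cd,bd$; its side edges are $bc$ and $bd$. *)

theory Defs
  imports Main
begin

definition simple_graph :: "'a set \<Rightarrow> 'a set set \<Rightarrow> bool" where
  "simple_graph V E \<longleftrightarrow> finite V \<and> (\<forall>e\<in>E. e \<subseteq> V \<and> card e = 2)"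

definition independent :: "'a set set \<Rightarrow> 'a set \<Rightarrow> bool" where
  "independent E X \<longleftrightarrow> (\<forall>u\<in>X. \<forall>v\<in>X. {u, v} \<notin> E)"

definition threshold_graph :: "'a set \<Rightarrow> 'a set set \<Rightarrow> bool" where
  "threshold_graph V E \<longleftrightarrow>
     (\<exists>(l :: 'a \<Rightarrow> nat) (t :: nat). \<forall>X. X \<subseteq> V \<longrightarrow>
        (independent E X \<longleftrightarrow> (\<Sum>x\<in>X. l x) \<le> t))"

definition middle_edge_of_induced_diamond :: "'a set \<Rightarrow> 'a set set \<Rightarrow> 'a set \<Rightarrow> bool" where
  "middle_edge_of_induced_diamond V E e \<longleftrightarrow>
     (\<exists>a b c d. distinct [a, b, c, d] \<and> {a, b, c, d} \<subseteq> V \<and> e = {a, b} \<and>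
        {a, b} \<in> E \<and> {a, c} \<in> E \<and> {a, d} \<in> E \<and> {b, c} \<in> E \<and> {b, d} \<in> E \<and>
        {c, d} \<notin> E)"

definition side_edge_of_induced_paw :: "'a set \<Rightarrow> 'a set set \<Rightarrow> 'a set \<Rightarrow> bool" where
  "side_edge_of_induced_paw V E e \<longleftrightarrow>
     (\<exists>a b c d. distinct [a, b, c, d] \<and> {a, b, c, d} \<subseteq> V \<and>
        (e = {b, c} \<or> e = {b, d}) \<and>
        {a, b} \<in> E \<and> {b, c} \<in> E \<and> {c, d} \<in> E \<and> {b, d} \<in> E \<and>
        {a, c} \<notin> E \<and> {a, d} \<notin> E)"

end

theory Submission
  imports Defs
begin

definition nopat :: "'a set \<Rightarrow> 'a set set \<Rightarrow> bool" where
  "nopat V E \<longleftrightarrow> (\<forall>p q r s. p \<in> V \<longrightarrow> q \<in> V \<longrightarrow> r \<in> V \<longrightarrow> s \<in> V \<longrightarrow>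
     distinct [p, q, r, s] \<longrightarrow> {p, q} \<in> E \<longrightarrow> {r, s} \<in> E \<longrightarrow> {p, r} \<notin> E \<longrightarrow> {q, s} \<notin> E \<longrightarrow> False)"

lemma thr_nopat:
  assumes sing: "\<forall>x. {x} \<notin> E" and thr: "threshold_graph V E"
  shows "nopat V E"
  unfolding nopat_def
proof (intro allI impI)
  fix p q r s
  assume "p \<in> V" "q \<in> V" "r \<in> V" "s \<in> V" and d: "distinct [p, q, r, s]"
    and e1: "{p, q} \<in> E" and e2: "{r, s} \<in> E" and n1: "{p, r} \<notin> E" and n2: "{q, s} \<notin> E"
  obtain l :: "'a \<Rightarrow> nat" and t where L: "\<forall>X. X \<subseteq> V \<longrightarrow> (independent E X \<longleftrightarrow> (\<Sum>x\<in>X. l x) \<le> t)"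
    using thr unfolding threshold_graph_def by blast
  have i1: "independent E {p, r}" unfolding independent_def using sing n1 by (auto simp: insert_commute)
  have i2: "independent E {q, s}" unfolding independent_def using sing n2 by (auto simp: insert_commute)
  have i3: "\<not> independent E {p, q}" unfolding independent_def using e1 by auto
  have i4: "\<not> independent E {r, s}" unfolding independent_def using e2 by auto
  have "l p + l r \<le> t" using L[rule_format, of "{p, r}"] i1 d \<open>p \<in> V\<close> \<open>r \<in> V\<close> by auto
  moreover have "l q + l s \<le> t" using L[rule_format, of "{q, s}"] i2 d \<open>q \<in> V\<close> \<open>s \<in> V\<close> by auto
  moreover have "l p + l q > t" using L[rule_format, of "{p, q}"] i3 d \<open>p \<in> V\<close> \<open>q \<in> V\<close> by auto
  moreover have "l r + l s > t" using L[rule_format, of "{r, s}"] i4 d \<open>r \<in> V\<close> \<open>s \<in> V\<close> by auto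
  ultimately show False by linarith
qed

lemma nopatD:
  assumes "nopat V E" "p \<in> V" "q \<in> V" "r \<in> V" "s \<in> V" "distinct [p, q, r, s]"
    "{p, q} \<in> E" "{r, s} \<in> E" "{p, r} \<notin> E" "{q, s} \<notin> E"
  shows False
  using assms unfolding nopat_def by blast

lemma nopat_mono: "nopat V E \<Longrightarrow> W \<subseteq> V \<Longrightarrow> nopat W E"
  unfolding nopat_def by blast

lemma iso_or_dom:
  assumes fin: "finite V" and ne: "V \<noteq> {}" and sing: "\<forall>x. {x} \<notin> E" and np: "nopat V E"
  shows "\<exists>v\<in>V. (\<forall>w\<in>V. {v, w} \<notin> E) \<or> (\<forall>w\<in>V. w \<noteq> v \<longrightarrow> {v, w} \<in> E)"
proof -
  define N where "N w = {x \<in> V. {w, x} \<in> E}" for w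
  have finN: "finite (N w)" for w using fin unfolding N_def by auto
  define m where "m = Max ((\<lambda>w. card (N w)) ` V)"
  have "m \<in> (\<lambda>w. card (N w)) ` V" unfolding m_def using fin ne by (intro Max_in) auto
  then obtain v where v: "v \<in> V" "card (N v) = m" by auto
  have mx: "card (N w) \<le> card (N v)" if "w \<in> V" for w
    using v fin that unfolding m_def by (auto intro: Max_ge)
  show ?thesis
  proof (cases "\<forall>w\<in>V. w \<noteq> v \<longrightarrow> {v, w} \<in> E")
    case True then show ?thesis using v by blast
  next
    case False
    then obtain u where u: "u \<in> V" "u \<noteq> v" "{v, u} \<notin> E" by blast
    have "\<forall>x\<in>V. {u, x} \<notin> E"
    proof (rule ccontr)
      assume "\<not> (\<forall>x\<in>V. {u, x} \<notin> E)"
      then obtain x where x: "x \<in> V" "{u, x} \<in> E" by blast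
      have xu: "x \<noteq> u" using x sing by auto
      have xv: "x \<noteq> v" using x u by (auto simp: insert_commute)
      show False
      proof (cases "{v, x} \<in> E")
        case False
        have "\<exists>y\<in>V. {v, y} \<in> E \<and> {u, y} \<notin> E"
        proof (rule ccontr)
          assume "\<not> ?thesis"
          then have "N v \<subseteq> N u" unfolding N_def by auto
          moreover have "x \<in> N u" "x \<notin> N v" using x False unfolding N_def by auto
          ultimately have "N v \<subset> N u" by blast
          then have "card (N v) < card (N u)" using finN by (intro psubset_card_mono) auto
          then show False using mx u by force
        qed
        then obtain y where y: "y \<in> V" "{v, y} \<in> E" "{u, y} \<notin> E" by blast
        have "y \<noteq> x" using y False by auto
        moreover have "y \<noteq> u" using y u by auto
        moreover have "y \<noteq> v" using y sing by auto
        ultimately show False using v u x y xu xv False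
          by (intro nopatD[OF np, of u x y v]) (auto simp: insert_commute)
      next
        case True
        have "\<exists>y\<in>V. y \<noteq> x \<and> {v, y} \<in> E \<and> {x, y} \<notin> E"
        proof (rule ccontr)
          assume "\<not> ?thesis"
          then have sub: "insert u (insert v (N v - {x})) \<subseteq> N x"
            unfolding N_def using u v x True by (auto simp: insert_commute)
          have "u \<notin> N v" "v \<notin> N v" using u sing unfolding N_def by auto
          moreover have "x \<in> N v" using True x unfolding N_def by auto
          ultimately have "card (insert u (insert v (N v - {x}))) = card (N v) + 1"
            using finN u by (simp add: card_Diff_singleton) (metis card_0_eq empty_iff finN Suc_pred neq0_conv)
          moreover have "card (insert u (insert v (N v - {x}))) \<le> card (N x)"
            using sub finN by (intro card_mono) auto
          ultimately show False using mx x by force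
        qed
        then obtain y where y: "y \<in> V" "y \<noteq> x" "{v, y} \<in> E" "{x, y} \<notin> E" by blast
        have "y \<noteq> u" using y u by auto
        moreover have "y \<noteq> v" using y sing by auto
        ultimately show False using v u x y xu xv True
          by (intro nopatD[OF np, of u x v y]) (auto simp: insert_commute)
      qed
    qed
    then show ?thesis using u by blast
  qed
qed


lemma indep_insert:
  assumes "\<forall>x. {x} \<notin> E"
  shows "independent E (insert v X) \<longleftrightarrow> independent E X \<and> (\<forall>w\<in>X. {v, w} \<notin> E)"
  using assms unfolding independent_def by (auto simp: insert_commute)

lemma nopat_thr:
  assumes fin: "finite V" and sing: "\<forall>x. {x} \<notin> E" and np: "nopat V E"
  shows "\<exists>(l :: 'a \<Rightarrow> nat) t. (\<forall>x\<in>V. 1 \<le> l x) \<and>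
           (\<forall>X. X \<subseteq> V \<longrightarrow> (independent E X \<longleftrightarrow> (\<Sum>x\<in>X. l x) \<le> t))"
  using fin np
proof (induction V rule: finite_remove_induct)
  case empty
  show ?case by (rule exI[of _ "\<lambda>_. 1"], rule exI[of _ 0]) (auto simp: independent_def)
next
  case (remove A)
  obtain v where v: "v \<in> A" and vc: "(\<forall>w\<in>A. {v, w} \<notin> E) \<or> (\<forall>w\<in>A. w \<noteq> v \<longrightarrow> {v, w} \<in> E)"
    using iso_or_dom[OF remove.hyps(1) remove.hyps(2) sing remove.prems] by blast
  have "nopat (A - {v}) E" using remove.prems nopat_mono by blast
  then obtain l :: "'a \<Rightarrow> nat" and t where
    lpos: "\<forall>x\<in>A - {v}. 1 \<le> l x" and
    L: "\<forall>X. X \<subseteq> A - {v} \<longrightarrow> (independent E X \<longleftrightarrow> (\<Sum>x\<in>X. l x) \<le> t)"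
    using remove.IH[OF v] by blast
  have finA: "finite A" by fact
  define c where "c = (if \<forall>w\<in>A. {v, w} \<notin> E then 1 else 2 * t + 1)"
  define l' where "l' x = (if x = v then c else 2 * l x)" for x
  have sumv: "(\<Sum>x\<in>X. l' x) = 2 * (\<Sum>x\<in>X. l x)" if "v \<notin> X" for X
  proof -
    have "(\<Sum>x\<in>X. l' x) = (\<Sum>x\<in>X. 2 * l x)" using that unfolding l'_def by (intro sum.cong) auto
    then show ?thesis by (simp add: sum_distrib_left)
  qed
  show ?case
  proof (rule exI[of _ l'], rule exI[of _ "2 * t + 1"], intro conjI allI impI)
    show "\<forall>x\<in>A. 1 \<le> l' x" using lpos unfolding l'_def c_def by auto
  next
    fix X assume XA: "X \<subseteq> A"
    show "independent E X = (sum l' X \<le> 2 * t + 1)"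
    proof (cases "v \<in> X")
      case False
      then have "X \<subseteq> A - {v}" using XA by blast
      then show ?thesis using L sumv[OF False] by auto
    next
      case True
      define Y where "Y = X - {v}"
      have XY: "X = insert v Y" and vY: "v \<notin> Y" and YA: "Y \<subseteq> A - {v}"
        using True XA unfolding Y_def by auto
      have finY: "finite Y" using YA finA finite_subset by blast
      have sX: "sum l' X = c + 2 * sum l Y"
        using XY vY finY sumv[OF vY] by (simp add: l'_def)
      have iX: "independent E X \<longleftrightarrow> independent E Y \<and> (\<forall>w\<in>Y. {v, w} \<notin> E)"
        using XY indep_insert[OF sing] by simp
      show ?thesis
      proof (cases "\<forall>w\<in>A. {v, w} \<notin> E")
        case True
        then show ?thesis using iX sX L YA unfolding c_def by auto
      next
        case False
        then have dom: "\<forall>w\<in>A. w \<noteq> v \<longrightarrow> {v, w} \<in> E" using vc by blast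
        have c: "c = 2 * t + 1" using False unfolding c_def by auto
        show ?thesis
        proof (cases "Y = {}")
          case True
          then show ?thesis using iX sX c by (simp add: independent_def)
        next
          case False
          then obtain w where w: "w \<in> Y" by blast
          then have "{v, w} \<in> E" using dom YA by auto
          then have "\<not> independent E X" using iX w by blast
          moreover have "l w \<le> sum l Y" using w finY by (intro member_le_sum) auto
          moreover have "1 \<le> l w" using lpos w YA by auto
          ultimately show ?thesis using sX c by auto
        qed
      qed
    qed
  qed
qed

lemma diamond_paw_case:
  assumes sing: "\<forall>x. {x} \<notin> E" and np: "nopat V E"
    and "p \<in> V" "q \<in> V" "r \<in> V" "s \<in> V" and d: "distinct [p, q, r, s]"
    and "{p, q} \<in> E" "{r, s} \<in> E" "{p, r} \<in> E" "{q, s} \<notin> E"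
  shows "middle_edge_of_induced_diamond V E {p, r} \<or> side_edge_of_induced_paw V E {p, r}"
proof -
  consider "{p, s} \<in> E" "{q, r} \<in> E" | "{p, s} \<in> E" "{q, r} \<notin> E"
    | "{p, s} \<notin> E" "{q, r} \<in> E" | "{p, s} \<notin> E" "{q, r} \<notin> E" by blast
  then show ?thesis
  proof cases
    case 1
    then have "middle_edge_of_induced_diamond V E {p, r}"
      unfolding middle_edge_of_induced_diamond_def using assms
      by (intro exI[of _ p] exI[of _ r] exI[of _ q] exI[of _ s]) (auto simp: insert_commute)
    then show ?thesis by blast
  next
    case 2
    then have "side_edge_of_induced_paw V E {p, r}"
      unfolding side_edge_of_induced_paw_def using assms
      by (intro exI[of _ q] exI[of _ p] exI[of _ r] exI[of _ s]) (auto simp: insert_commute)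
    then show ?thesis by blast
  next
    case 3
    then have "side_edge_of_induced_paw V E {p, r}"
      unfolding side_edge_of_induced_paw_def using assms
      by (intro exI[of _ s] exI[of _ r] exI[of _ p] exI[of _ q]) (auto simp: insert_commute)
    then show ?thesis by blast
  next
    case 4
    have False using 4 assms
      by (intro nopatD[OF np, of q p r s]) (auto simp: insert_commute)
    then show ?thesis by blast
  qed
qed

theorem lemma4p3:
  fixes V :: "'a set" and E :: "'a set set" and e :: "'a set"
  assumes "simple_graph V E"
    and "threshold_graph V E"
    and "e \<in> E"
  shows "threshold_graph V (E - {e}) \<longleftrightarrow>
           \<not> middle_edge_of_induced_diamond V E e \<and> \<not> side_edge_of_induced_paw V E e"
proof -
  have sing: "\<forall>x. {x} \<notin> E" using assms(1) unfolding simple_graph_def by auto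
  have sing': "\<forall>x. {x} \<notin> E - {e}" using sing by auto
  have fin: "finite V" using assms(1) unfolding simple_graph_def by auto
  have npE: "nopat V E" using thr_nopat[OF sing assms(2)] .
  show ?thesis
  proof
    assume T: "threshold_graph V (E - {e})"
    have np': "nopat V (E - {e})" using thr_nopat[OF sing' T] .
    show "\<not> middle_edge_of_induced_diamond V E e \<and> \<not> side_edge_of_induced_paw V E e"
    proof (intro conjI notI)
      assume "middle_edge_of_induced_diamond V E e"
      then obtain a b c d where h: "distinct [a, b, c, d]" "{a, b, c, d} \<subseteq> V" "e = {a, b}"
        "{a, b} \<in> E" "{a, c} \<in> E" "{a, d} \<in> E" "{b, c} \<in> E" "{b, d} \<in> E" "{c, d} \<notin> E"
        unfolding middle_edge_of_induced_diamond_def by blast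
      show False using h
        by (intro nopatD[OF np', of a c b d]) (auto simp: insert_commute doubleton_eq_iff)
    next
      assume "side_edge_of_induced_paw V E e"
      then obtain a b c d where h: "distinct [a, b, c, d]" "{a, b, c, d} \<subseteq> V"
        "e = {b, c} \<or> e = {b, d}"
        "{a, b} \<in> E" "{b, c} \<in> E" "{c, d} \<in> E" "{b, d} \<in> E" "{a, c} \<notin> E" "{a, d} \<notin> E"
        unfolding side_edge_of_induced_paw_def by blast
      from h(3) show False
      proof
        assume "e = {b, c}"
        then show False using h
          by (intro nopatD[OF np', of a b d c]) (auto simp: insert_commute doubleton_eq_iff)
      next
        assume "e = {b, d}"
        then show False using h
          by (intro nopatD[OF np', of a b c d]) (auto simp: insert_commute doubleton_eq_iff)
      qed
    qed
  next
    assume N: "\<not> middle_edge_of_induced_diamond V E e \<and> \<not> side_edge_of_induced_paw V E e"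
    have "nopat V (E - {e})"
      unfolding nopat_def
    proof (intro allI impI)
      fix p q r s
      assume hv: "p \<in> V" "q \<in> V" "r \<in> V" "s \<in> V" and d: "distinct [p, q, r, s]"
        and e1: "{p, q} \<in> E - {e}" and e2: "{r, s} \<in> E - {e}"
        and n1: "{p, r} \<notin> E - {e}" and n2: "{q, s} \<notin> E - {e}"
      have "{p, r} = e \<or> {q, s} = e"
      proof (rule ccontr)
        assume "\<not> ?thesis"
        then show False using hv d e1 e2 n1 n2 by (intro nopatD[OF npE, of p q r s]) auto
      qed
      then show False
      proof
        assume pr: "{p, r} = e"
        have "{q, s} \<noteq> e" using pr d by (auto simp: doubleton_eq_iff)
        then have "{q, s} \<notin> E" using n2 by auto
        then have "middle_edge_of_induced_diamond V E {p, r} \<or> side_edge_of_induced_paw V E {p, r}"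
          using diamond_paw_case[OF sing npE hv d] e1 e2 pr assms(3) by auto
        then show False using N pr by auto
      next
        assume qs: "{q, s} = e"
        have "{p, r} \<noteq> e" using qs d by (auto simp: doubleton_eq_iff)
        then have "{p, r} \<notin> E" using n1 by auto
        moreover have "distinct [q, p, s, r]" using d by auto
        ultimately have "middle_edge_of_induced_diamond V E {q, s} \<or> side_edge_of_induced_paw V E {q, s}"
          using diamond_paw_case[OF sing npE hv(2,1,4,3)] e1 e2 qs assms(3) by (auto simp: insert_commute)
        then show False using N qs by auto
      qed
    qed
    then obtain l :: "'a \<Rightarrow> nat" and t where
      "\<forall>X. X \<subseteq> V \<longrightarrow> (independent (E - {e}) X \<longleftrightarrow> (\<Sum>x\<in>X. l x) \<le> t)"
      using nopat_thr[OF fin sing'] by blast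
    then show "threshold_graph V (E - {e})" unfolding threshold_graph_def by blast
  qed
qed

end
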